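(* Let $P$ be a $d$-dimensional $(m+1)$-level polytope. Then the monotone diameter of $P$ is at most $(d-1)m+1$.
   Context: A polytope $P=\{\mathbf{x}: A\mathbf{x}\le \mathbf{b}\}$, with $A\mathbf{x}\le\mathbf{b}$ an irredundant description and vertex set $V(P)$, is $(m+1)$-level if for every row $\mathbf{a}^i$ of $A$, $|\{(\mathbf{a}^i)^{\intercal}\mathbf{v} : \mathbf{v}\in V(P)\}|\le m+1$. A $\mathbf{c}$-monotone path is a sequence of vertices of $P$ in which consecutive vertices are joined by an edge of $P$ and $\mathbf{c}^{\intercal}\mathbf{x}$ strictly increases; its length is its number of edges. The monotone diameter of $P$ is the maximum, over all generic linear objectives $\mathbf{c}$ (not constant on any edge) and all vertices $\mathbf{v}$, of the length of a shortest $\mathbf{c}$-monotone path from $\mathbf{v}$ to the $\mathbf{c}$-maximal vertex. *)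

theory Defs
  imports "HOL-Analysis.Analysis" "HOL-Library.Extended_Nat"
begin

definition vertices :: "'a::euclidean_space set \<Rightarrow> 'a set" where
  "vertices P = {v. v extreme_point_of P}"

definition ineq_set :: "('a::euclidean_space \<times> real) list \<Rightarrow> 'a set" where
  "ineq_set R = {x. \<forall>i<length R. fst (R ! i) \<bullet> x \<le> snd (R ! i)}"

definition irredundant :: "('a::euclidean_space \<times> real) list \<Rightarrow> bool" where
  "irredundant R \<longleftrightarrow>
     (\<forall>i<length R.
        {x. \<forall>j<length R. j \<noteq> i \<longrightarrow> fst (R ! j) \<bullet> x \<le> snd (R ! j)} \<noteq> ineq_set R)"

definition level_polytope :: "nat \<Rightarrow> 'a::euclidean_space set \<Rightarrow> bool" where
  "level_polytope k P \<longleftrightarrow>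
     (\<exists>R. P = ineq_set R \<and> irredundant R \<and>
        (\<forall>i<length R. card ((\<lambda>v. fst (R ! i) \<bullet> v) ` vertices P) \<le> k))"

definition generic_objective :: "'a::euclidean_space set \<Rightarrow> 'a \<Rightarrow> bool" where
  "generic_objective P c \<longleftrightarrow>
     (\<forall>E. E edge_of P \<longrightarrow> \<not> (\<forall>x\<in>E. \<forall>y\<in>E. c \<bullet> x = c \<bullet> y))"

definition monotone_path :: "'a::euclidean_space set \<Rightarrow> 'a \<Rightarrow> 'a list \<Rightarrow> bool" where
  "monotone_path P c p \<longleftrightarrow> p \<noteq> [] \<and> set p \<subseteq> vertices P \<and>
     (\<forall>i. Suc i < length p \<longrightarrow>
        closed_segment (p ! i) (p ! Suc i) edge_of P \<and> c \<bullet> (p ! i) < c \<bullet> (p ! Suc i))"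

definition shortest_monotone_length :: "'a::euclidean_space set \<Rightarrow> 'a \<Rightarrow> 'a \<Rightarrow> enat" where
  "shortest_monotone_length P c v =
     (INF p \<in> {p. monotone_path P c p \<and> hd p = v \<and>
                  (\<forall>u\<in>vertices P. c \<bullet> u \<le> c \<bullet> last p)}. enat (length p - 1))"

definition monotone_diameter :: "'a::euclidean_space set \<Rightarrow> enat" where
  "monotone_diameter P =
     (SUP c \<in> {c. generic_objective P c}. SUP v \<in> vertices P. shortest_monotone_length P c v)"

end

theory Submission
  imports Defs
begin

lemma small_eps:
  fixes f g k :: "'b \<Rightarrow> real"
  assumes "finite A" "\<forall>h\<in>A. f h < g h"
  shows "\<exists>e>0. \<forall>h\<in>A. \<forall>t. 0 \<le> t \<and> t \<le> e \<longrightarrow> f h + t * k h < g h"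
  using assms
proof (induction A rule: finite_induct)
  case empty
  show ?case by (intro exI[of _ 1]) auto
next
  case (insert h A)
  then obtain e where e: "e>0" "\<forall>h\<in>A. \<forall>t. 0 \<le> t \<and> t \<le> e \<longrightarrow> f h + t * k h < g h"
    by auto
  define e2 where "e2 = (g h - f h) / (\<bar>k h\<bar> + 1)"
  have gf: "g h - f h > 0" using insert by auto
  have e2: "e2 > 0" using gf by (simp add: e2_def add_pos_nonneg)
  have *: "f h + t * k h < g h" if "0 \<le> t" "t \<le> e2" for t
  proof -
    have "t * k h \<le> t * \<bar>k h\<bar>" using that by (simp add: mult_left_mono)
    also have "\<dots> \<le> e2 * \<bar>k h\<bar>" using that by (simp add: mult_right_mono)
    also have "\<dots> < g h - f h"
    proof -
      have "e2 * \<bar>k h\<bar> = (g h - f h) * (\<bar>k h\<bar> / (\<bar>k h\<bar> + 1))" by (simp add: e2_def)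
      also have "\<dots> < (g h - f h) * 1"
        using gf by (intro mult_strict_left_mono) auto
      finally show ?thesis by simp
    qed
    finally show ?thesis by simp
  qed
  show ?case
    using e e2 * by (intro exI[of _ "min e e2"]) auto
qed

lemma seg_le:
  fixes a b z c :: "'a::euclidean_space"
  assumes "z \<in> closed_segment a b" "c \<bullet> a \<le> c \<bullet> b"
  shows "c \<bullet> z \<le> c \<bullet> b"
proof -
  obtain u where u: "0 \<le> u" "u \<le> 1" "z = (1 - u) *\<^sub>R a + u *\<^sub>R b"
    using assms(1) by (auto simp: in_segment)
  have "c \<bullet> z = (1 - u) * (c \<bullet> a) + u * (c \<bullet> b)"
    using u by (simp add: inner_add_right)
  also have "\<dots> \<le> c \<bullet> b"
    using u assms(2) by (intro convex_bound_le) auto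
  finally show ?thesis .
qed

lemma vertices_face:
  assumes "F face_of P" "x \<in> vertices F"
  shows "x \<in> vertices P"
  using assms face_of_singleton face_of_trans unfolding vertices_def by blast

lemma vertices_sub:
  assumes "x \<in> vertices F" "x \<in> G" "G \<subseteq> F"
  shows "x \<in> vertices G"
  using assms unfolding vertices_def extreme_point_of_def by blast

lemma polytope_vertices:
  fixes P :: "'a::euclidean_space set"
  assumes "polytope P"
  shows "finite (vertices P)" "P = convex hull (vertices P)"
  using assms finite_polyhedron_extreme_points polytope_imp_polyhedron
    Krein_Milman_Minkowski polytope_imp_compact polytope_imp_convex
  unfolding vertices_def by blast+

lemma polytope_max_vertex:
  fixes P :: "'a::euclidean_space set"
  assumes "polytope P" "\<forall>w\<in>vertices P. c \<bullet> w \<le> M" "z \<in> P"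
  shows "c \<bullet> z \<le> M"
proof -
  have "convex hull (vertices P) \<subseteq> {x. c \<bullet> x \<le> M}"
    using assms(2) by (intro hull_minimal) (auto simp: convex_halfspace_le)
  then show ?thesis using polytope_vertices(2)[OF assms(1)] assms(3) by blast
qed

lemma succ_nth:
  assumes "successively R p" "Suc i < length p"
  shows "R (p ! i) (p ! Suc i)"
  using assms
proof (induction R p arbitrary: i rule: successively.induct)
  case (3 P x y xs)
  then show ?case by (cases i) auto
qed auto

lemma facet_escape:
  fixes S :: "'a::euclidean_space set"
  assumes polyS: "polytope S" and dimS: "aff_dim S \<ge> 2" and ext: "v extreme_point_of S"
    and yS: "y \<in> S" and cy: "c \<bullet> y > c \<bullet> v"
  shows "\<exists>G. G facet_of S \<and> v \<in> G \<and> (\<exists>z\<in>G. c \<bullet> z > c \<bullet> v)"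
proof -
  have poly: "polyhedron S" using polyS polytope_imp_polyhedron by blast
  obtain H where "finite H" and seq: "S = affine hull S \<inter> \<Inter>H"
    and faces: "\<And>h. h \<in> H \<Longrightarrow> \<exists>a b. a \<noteq> 0 \<and> h = {x. a \<bullet> x \<le> b}"
    and min: "\<And>F'. F' \<subset> H \<Longrightarrow> S \<subset> affine hull S \<inter> \<Inter>F'"
    using poly by (simp add: polyhedron_Int_affine_minimal) meson
  then obtain a b where ab: "\<And>h. h \<in> H \<Longrightarrow> a h \<noteq> 0 \<and> h = {x. a h \<bullet> x \<le> b h}"
    by metis
  note fac = facet_of_polyhedron_explicit[OF \<open>finite H\<close> seq ab min]
  define A where "A = affine hull S"
  have seq': "S = A \<inter> \<Inter>H" using seq A_def by simp
  have memS: "x \<in> S \<longleftrightarrow> x \<in> A \<and> (\<forall>h\<in>H. a h \<bullet> x \<le> b h)" for x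
  proof -
    have "x \<in> S \<longleftrightarrow> x \<in> A \<inter> \<Inter>H" using seq' by simp
    also have "\<dots> \<longleftrightarrow> x \<in> A \<and> (\<forall>h\<in>H. a h \<bullet> x \<le> b h)"
      using ab by auto
    finally show ?thesis .
  qed
  have vS: "v \<in> S" using ext extreme_point_of_def by blast
  have affA: "affine A" unfolding A_def by simp
  have SA: "S \<subseteq> A" unfolding A_def by (simp add: hull_subset)
  define d1 where "d1 = y - v"
  have cd1: "c \<bullet> d1 > 0" using cy by (simp add: d1_def inner_diff_right)
  obtain y2 where y2S: "y2 \<in> S" and y2nd: "\<not> (\<exists>t. y2 - v = t *\<^sub>R d1)"
  proof -
    have "\<exists>y2\<in>S. \<not> (\<exists>t. y2 - v = t *\<^sub>R d1)"
    proof (rule ccontr)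
      assume "\<not> ?thesis"
      then have all: "\<forall>z\<in>S. \<exists>t. z - v = t *\<^sub>R d1" by blast
      have "S \<subseteq> affine hull {v, y}"
      proof
        fix z assume "z \<in> S"
        then obtain t where t: "z - v = t *\<^sub>R d1" using all by blast
        have "z = (1 - t) *\<^sub>R v + t *\<^sub>R y" using t by (simp add: d1_def algebra_simps)
        moreover have "(1 - t) *\<^sub>R v + t *\<^sub>R y \<in> affine hull {v, y}"
          by (intro mem_affine[OF affine_affine_hull]) (auto simp: hull_inc)
        ultimately show "z \<in> affine hull {v, y}" by simp
      qed
      then have "aff_dim S \<le> aff_dim (affine hull {v, y})" by (rule aff_dim_subset)
      also have "\<dots> \<le> 1" by simp
      finally show False using dimS by simp
    qed
    then show ?thesis using that by blast
  qed
  define d2 where "d2 = y2 - v"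
  have PA: "v + (\<alpha> *\<^sub>R d1 + \<beta> *\<^sub>R d2) \<in> A" for \<alpha> \<beta>
  proof -
    have "(1 - \<alpha> - \<beta>) *\<^sub>R v + \<alpha> *\<^sub>R y + \<beta> *\<^sub>R y2 \<in> A"
      using SA vS yS y2S by (intro mem_affine_3[OF affA]) auto
    moreover have "(1 - \<alpha> - \<beta>) *\<^sub>R v + \<alpha> *\<^sub>R y + \<beta> *\<^sub>R y2 = v + (\<alpha> *\<^sub>R d1 + \<beta> *\<^sub>R d2)"
      by (simp add: d1_def d2_def algebra_simps)
    ultimately show ?thesis by simp
  qed
  define g where "g = (c \<bullet> d2) *\<^sub>R d1 - (c \<bullet> d1) *\<^sub>R d2"
  have cg: "c \<bullet> g = 0" by (simp add: g_def inner_diff_right)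
  have gnz: "g \<noteq> 0"
  proof
    assume "g = 0"
    then have "(c \<bullet> d1) *\<^sub>R d2 = (c \<bullet> d2) *\<^sub>R d1" by (simp add: g_def)
    then have eq: "(c \<bullet> d1) *\<^sub>R d2 = (c \<bullet> d2) *\<^sub>R d1" .
    have "d2 = inverse (c \<bullet> d1) *\<^sub>R ((c \<bullet> d1) *\<^sub>R d2)" using cd1 by simp
    also have "\<dots> = ((c \<bullet> d2) / (c \<bullet> d1)) *\<^sub>R d1" unfolding eq by (simp add: divide_inverse_commute)
    finally have "d2 = ((c \<bullet> d2) / (c \<bullet> d1)) *\<^sub>R d1" .
    then show False using y2nd d2_def by blast
  qed
  define T where "T = {h\<in>H. a h \<bullet> v = b h}"
  have vrows: "\<forall>h\<in>H. a h \<bullet> v \<le> b h" using vS memS by blast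
  have strict: "\<forall>h\<in>H - T. a h \<bullet> v < b h" using vrows T_def by force
  have finHT: "finite (H - T)" using \<open>finite H\<close> by simp
  have "\<exists>h\<in>T. a h \<bullet> g \<noteq> 0"
  proof (rule ccontr)
    assume "\<not> ?thesis"
    then have zero: "\<forall>h\<in>T. a h \<bullet> g = 0" by blast
    obtain e1 where e1: "e1 > 0" "\<forall>h\<in>H - T. \<forall>t. 0 \<le> t \<and> t \<le> e1 \<longrightarrow> a h \<bullet> v + t * (a h \<bullet> g) < b h"
      using small_eps[OF finHT strict, of "\<lambda>h. a h \<bullet> g"] by blast
    obtain e2 where e2: "e2 > 0" "\<forall>h\<in>H - T. \<forall>t. 0 \<le> t \<and> t \<le> e2 \<longrightarrow> a h \<bullet> v + t * (- (a h \<bullet> g)) < b h"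
      using small_eps[OF finHT strict, of "\<lambda>h. - (a h \<bullet> g)"] by blast
    define e where "e = min e1 e2"
    have e: "e > 0" "e \<le> e1" "e \<le> e2" using e1 e2 by (auto simp: e_def)
    have p1: "v + e *\<^sub>R g \<in> S"
    proof -
      have "v + e *\<^sub>R g = v + ((e * (c \<bullet> d2)) *\<^sub>R d1 + (- (e * (c \<bullet> d1))) *\<^sub>R d2)"
        by (simp add: g_def algebra_simps)
      then have "v + e *\<^sub>R g \<in> A" by (rule ssubst) (rule PA)
      moreover have "a h \<bullet> (v + e *\<^sub>R g) \<le> b h" if "h \<in> H" for h
      proof (cases "h \<in> T")
        case True then show ?thesis using zero T_def by (simp add: inner_add_right)
      next
        case False then show ?thesis using e1(2) e that
          by (auto simp: inner_add_right intro: less_imp_le)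
      qed
      ultimately show ?thesis using memS by blast
    qed
    have p2: "v - e *\<^sub>R g \<in> S"
    proof -
      have "v - e *\<^sub>R g = v + ((- (e * (c \<bullet> d2))) *\<^sub>R d1 + (e * (c \<bullet> d1)) *\<^sub>R d2)"
        by (simp add: g_def algebra_simps)
      then have "v - e *\<^sub>R g \<in> A" by (rule ssubst) (rule PA)
      moreover have "a h \<bullet> (v - e *\<^sub>R g) \<le> b h" if "h \<in> H" for h
      proof (cases "h \<in> T")
        case True then show ?thesis using zero T_def by (simp add: inner_diff_right)
      next
        case False
        then have "a h \<bullet> v + e * (- (a h \<bullet> g)) < b h" using e2(2) e that by auto
        then show ?thesis by (simp add: inner_diff_right)
      qed
      ultimately show ?thesis using memS by blast
    qed
    have "v \<in> open_segment (v - e *\<^sub>R g) (v + e *\<^sub>R g)"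
      unfolding in_segment
    proof (intro conjI exI[of _ "1/2"])
      show "v - e *\<^sub>R g \<noteq> v + e *\<^sub>R g"
      proof
        assume a: "v - e *\<^sub>R g = v + e *\<^sub>R g"
        have "(v + e *\<^sub>R g) - (v - e *\<^sub>R g) = e *\<^sub>R g + e *\<^sub>R g" by simp
        then have "e *\<^sub>R g + e *\<^sub>R g = 0" using a by simp
        then have "(e + e) *\<^sub>R g = 0" by (simp only: scaleR_left_distrib)
        then show False using e gnz by simp
      qed
      show "v = (1 - 1 / 2) *\<^sub>R (v - e *\<^sub>R g) + (1 / 2) *\<^sub>R (v + e *\<^sub>R g)"
        by (simp add: algebra_simps flip: scaleR_add_left)
    qed auto
    then show False using ext p1 p2 unfolding extreme_point_of_def by blast
  qed
  then obtain h0 where h0T: "h0 \<in> T" and h0g: "a h0 \<bullet> g \<noteq> 0" by blast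
  define \<sigma> :: real where "\<sigma> = (if a h0 \<bullet> g > 0 then 1 else -1)"
  define g' where "g' = \<sigma> *\<^sub>R g"
  have h0g': "a h0 \<bullet> g' > 0" using h0g by (auto simp: g'_def \<sigma>_def)
  have cg': "c \<bullet> g' = 0" using cg by (simp add: g'_def)
  define Tp where "Tp = {h\<in>T. a h \<bullet> g' > 0}"
  define r where "r h = - (a h \<bullet> d1) / (a h \<bullet> g')" for h
  have finTp: "finite Tp" using \<open>finite H\<close> by (auto simp: Tp_def T_def)
  have Tpne: "Tp \<noteq> {}" using h0T h0g' Tp_def by blast
  define s where "s = Min (r ` Tp)"
  have "s \<in> r ` Tp" unfolding s_def using finTp Tpne by (intro Min_in) auto
  then obtain hs where hsTp: "hs \<in> Tp" and rhs: "r hs = s" by auto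
  have s_le: "s \<le> r h" if "h \<in> Tp" for h
    using finTp that by (simp add: s_def)
  have ad1: "a h \<bullet> d1 \<le> 0" if "h \<in> T" for h
  proof -
    have "a h \<bullet> y \<le> b h" using yS memS that T_def by blast
    then show ?thesis using that T_def by (simp add: d1_def inner_diff_right)
  qed
  have s0: "s \<ge> 0"
  proof -
    have "r hs \<ge> 0" using ad1[of hs] hsTp by (auto simp: r_def Tp_def intro!: divide_nonpos_pos)
    then show ?thesis using rhs by simp
  qed
  define d' where "d' = d1 + s *\<^sub>R g'"
  have ad': "a h \<bullet> d' \<le> 0" if "h \<in> T" for h
  proof (cases "h \<in> Tp")
    case True
    then have pos: "a h \<bullet> g' > 0" by (simp add: Tp_def)
    have "s \<le> - (a h \<bullet> d1) / (a h \<bullet> g')" using s_le[OF True] by (simp add: r_def)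
    then have "s * (a h \<bullet> g') \<le> - (a h \<bullet> d1)" using pos_le_divide_eq[OF pos] by blast
    then show ?thesis by (simp add: d'_def inner_add_right)
  next
    case False
    then have "a h \<bullet> g' \<le> 0" using that by (auto simp: Tp_def)
    then have "s * (a h \<bullet> g') \<le> 0" using s0 by (simp add: mult_nonneg_nonpos)
    then show ?thesis using ad1[OF that] by (simp add: d'_def inner_add_right)
  qed
  have ahs: "a hs \<bullet> d' = 0"
  proof -
    have pos: "a hs \<bullet> g' > 0" using hsTp by (simp add: Tp_def)
    have yne: "a hs \<bullet> g' \<noteq> 0" using pos by simp
    have "s * (a hs \<bullet> g') = (- (a hs \<bullet> d1) / (a hs \<bullet> g')) * (a hs \<bullet> g')"
      using rhs by (simp add: r_def)
    also have "\<dots> = - (a hs \<bullet> d1)" using yne by simp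
    finally have "s * (a hs \<bullet> g') = - (a hs \<bullet> d1)" .
    then show ?thesis by (simp add: d'_def inner_add_right)
  qed
  have cd': "c \<bullet> d' = c \<bullet> d1" using cg' by (simp add: d'_def inner_add_right)
  obtain e where e: "e > 0" "\<forall>h\<in>H - T. \<forall>t. 0 \<le> t \<and> t \<le> e \<longrightarrow> a h \<bullet> v + t * (a h \<bullet> d') < b h"
    using small_eps[OF finHT strict, of "\<lambda>h. a h \<bullet> d'"] by blast
  define z where "z = v + e *\<^sub>R d'"
  have zS: "z \<in> S"
  proof -
    have "z = v + ((e + e * s * \<sigma> * (c \<bullet> d2)) *\<^sub>R d1 + (- (e * s * \<sigma> * (c \<bullet> d1))) *\<^sub>R d2)"
      by (simp add: z_def d'_def g'_def g_def algebra_simps)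
    then have "z \<in> A" by (rule ssubst) (rule PA)
    moreover have "a h \<bullet> z \<le> b h" if "h \<in> H" for h
    proof (cases "h \<in> T")
      case True
      then have "e * (a h \<bullet> d') \<le> 0" using ad' e by (simp add: mult_nonneg_nonpos)
      then show ?thesis using True T_def by (simp add: z_def inner_add_right)
    next
      case False then show ?thesis using e that
        by (auto simp: z_def inner_add_right intro: less_imp_le)
    qed
    ultimately show ?thesis using memS by blast
  qed
  have hsH: "hs \<in> H" and hsT: "hs \<in> T" using hsTp by (auto simp: Tp_def T_def)
  define G where "G = S \<inter> {x. a hs \<bullet> x = b hs}"
  have "G facet_of S" using fac hsH G_def by blast
  moreover have "v \<in> G" using vS hsT by (simp add: G_def T_def)
  moreover have "z \<in> G" using zS hsT ahs by (simp add: G_def T_def z_def inner_add_right)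
  moreover have "c \<bullet> z > c \<bullet> v" using cd' cd1 e by (simp add: z_def inner_add_right)
  ultimately show ?thesis by blast
qed

lemma loc:
  fixes S :: "'a::euclidean_space set"
  shows "polytope S \<Longrightarrow> v extreme_point_of S \<Longrightarrow> y \<in> S \<Longrightarrow> c \<bullet> y > c \<bullet> v \<Longrightarrow>
    \<exists>w. closed_segment v w edge_of S \<and> c \<bullet> w > c \<bullet> v"
proof (induction "nat (aff_dim S)" arbitrary: S y rule: less_induct)
  case less
  note polyS = less.prems(1) and ext = less.prems(2) and yS = less.prems(3) and cy = less.prems(4)
  have vS: "v \<in> S" using ext extreme_point_of_def by blast
  show ?case
  proof (cases "aff_dim S \<le> 1")
    case True
    obtain n where "n simplex S" using polytope_lowdim_imp_simplex polyS True by blast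
    then obtain C where C: "finite C" "\<not> affine_dependent C" "int (card C) = n + 1" "S = convex hull C"
      by (auto simp: simplex)
    have n: "n = aff_dim S" using aff_dim_simplex[OF \<open>n simplex S\<close>] by simp
    have "S \<noteq> {}" using yS by blast
    then have "aff_dim S \<ge> 0" using aff_dim_negative_iff[of S] by linarith
    then have "card C = 1 \<or> card C = 2" using C(3) n True by linarith
    then show ?thesis
    proof
      assume "card C = 1"
      then obtain a where "C = {a}" by (auto simp: card_1_singleton_iff)
      then have "S = {a}" using C(4) by simp
      then show ?thesis using vS yS cy by simp
    next
      assume "card C = 2"
      then obtain a b where ab: "C = {a, b}" "a \<noteq> b" by (auto simp: card_2_iff)
      have Sseg: "S = closed_segment a b" using C(4) ab by (simp add: segment_convex_hull)
      have "aff_dim S = 1" using n C(3) \<open>card C = 2\<close> by simp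
      then have edge: "S edge_of S"
        unfolding edge_of_def using face_of_refl[OF polytope_imp_convex[OF polyS]] by simp
      have "v = a \<or> v = b" using ext Sseg extreme_point_of_segment by blast
      then show ?thesis
      proof
        assume "v = a"
        have "c \<bullet> b > c \<bullet> a"
        proof (rule ccontr)
          assume "\<not> ?thesis"
          moreover have "y \<in> closed_segment b a" using yS Sseg by (metis closed_segment_commute)
          ultimately have "c \<bullet> y \<le> c \<bullet> a" using seg_le[of y b a c] by simp
          then show False using cy \<open>v = a\<close> by simp
        qed
        then show ?thesis using edge Sseg \<open>v = a\<close> by (intro exI[of _ b]) simp
      next
        assume "v = b"
        have "c \<bullet> a > c \<bullet> b"
        proof (rule ccontr)
          assume "\<not> ?thesis"
          then have "c \<bullet> y \<le> c \<bullet> b" using seg_le[of y a b c] yS Sseg by simp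
          then show False using cy \<open>v = b\<close> by simp
        qed
        moreover have "closed_segment b a = S" using Sseg closed_segment_commute by metis
        ultimately show ?thesis using edge \<open>v = b\<close> by (intro exI[of _ a]) simp
      qed
    qed
  next
    case False
    then have "aff_dim S \<ge> 2" by simp
    then obtain G z where G: "G facet_of S" "v \<in> G" "z \<in> G" "c \<bullet> z > c \<bullet> v"
      using facet_escape[OF polyS _ ext yS cy] by blast
    have polyG: "polytope G" using G(1) polyS face_of_polytope_polytope facet_of_imp_face_of by blast
    have dimG: "aff_dim G = aff_dim S - 1" using G(1) facet_of_def by blast
    have lt: "nat (aff_dim G) < nat (aff_dim S)" using dimG False by simp
    have extG: "v extreme_point_of G"
      using ext G(2) facet_of_imp_subset[OF G(1)] unfolding extreme_point_of_def by blast
    obtain w where w: "closed_segment v w edge_of G" "c \<bullet> w > c \<bullet> v"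
      using less.hyps[OF lt polyG extG G(3) G(4)] by blast
    have "closed_segment v w edge_of S"
      using w(1) G(1) unfolding edge_of_def using face_of_trans facet_of_imp_face_of by blast
    then show ?thesis using w(2) by blast
  qed
qed

lemma rows:
  fixes P :: "'a::euclidean_space set"
  assumes PR: "P = ineq_set R" and F: "F face_of P" and G: "G facet_of F"
  shows "\<exists>i<length R. G = F \<inter> {x. fst (R!i) \<bullet> x = snd (R!i)}"
proof -
  define a where "a i = fst (R!i)" for i
  define b where "b i = snd (R!i)" for i
  have memP: "x \<in> P \<longleftrightarrow> (\<forall>i<length R. a i \<bullet> x \<le> b i)" for x
    using PR by (simp add: ineq_set_def a_def b_def)
  have GF: "G face_of F" "G \<noteq> {}" "aff_dim G = aff_dim F - 1" using G facet_of_def by auto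
  have GP: "G face_of P" using face_of_trans GF(1) F by blast
  have GneF: "G \<noteq> F" using GF(3) by auto
  have GsubF: "G \<subseteq> F" using GF(1) face_of_imp_subset by blast
  obtain y where yF: "y \<in> F" and yG: "y \<notin> G" using GsubF GneF by blast
  have FP: "F \<subseteq> P" using F face_of_imp_subset by blast
  have yP: "y \<in> P" using yF FP by blast
  have convG: "convex G" using GF(1) face_of_imp_convex by blast
  have convF: "convex F" using F face_of_imp_convex by blast
  obtain g where gG: "g \<in> rel_interior G" using rel_interior_eq_empty[OF convG] GF(2) by blast
  have gG': "g \<in> G" using gG rel_interior_subset by blast
  have GP': "G \<subseteq> P" using GsubF FP by blast
  have "\<exists>i<length R. (\<forall>z\<in>G. a i \<bullet> z = b i) \<and> a i \<bullet> y < b i"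
  proof (rule ccontr)
    assume nex: "\<not> ?thesis"
    define Aset where "Aset = {i. i < length R \<and> \<not> (\<forall>z\<in>G. a i \<bullet> z = b i)}"
    have finA: "finite Aset" unfolding Aset_def by simp
    have strictg: "\<forall>i\<in>Aset. a i \<bullet> g < b i"
    proof
      fix i assume i: "i \<in> Aset"
      have le: "\<forall>z\<in>G. a i \<bullet> z \<le> b i" using i memP GP' Aset_def by blast
      show "a i \<bullet> g < b i"
      proof (rule ccontr)
        assume "\<not> a i \<bullet> g < b i"
        then have eq: "a i \<bullet> g = b i" using le gG' by force
        have "(G \<inter> {x. a i \<bullet> x = b i}) face_of G"
          using face_of_Int_supporting_hyperplane_le[OF convG] le by blast
        moreover have "(G \<inter> {x. a i \<bullet> x = b i}) \<inter> rel_interior G \<noteq> {}" using gG gG' eq by blast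
        ultimately have "G \<subseteq> G \<inter> {x. a i \<bullet> x = b i}"
          using subset_of_face_of by blast
        then show False using i Aset_def by blast
      qed
    qed
    obtain e where e: "e > 0"
      "\<forall>i\<in>Aset. \<forall>t. 0 \<le> t \<and> t \<le> e \<longrightarrow> a i \<bullet> g + t * (a i \<bullet> (g - y)) < b i"
      using small_eps[OF finA strictg, of "\<lambda>i. a i \<bullet> (g - y)"] by blast
    define z where "z = g + e *\<^sub>R (g - y)"
    have zP: "z \<in> P"
      unfolding memP
    proof (intro allI impI)
      fix i assume i: "i < length R"
      show "a i \<bullet> z \<le> b i"
      proof (cases "i \<in> Aset")
        case True
        then have "a i \<bullet> g + e * (a i \<bullet> (g - y)) < b i" using e by auto
        then show ?thesis by (simp add: z_def inner_add_right)
      next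
        case False
        then have all: "\<forall>z\<in>G. a i \<bullet> z = b i" using i Aset_def by blast
        then have ag: "a i \<bullet> g = b i" using gG' by blast
        have "a i \<bullet> y \<le> b i" using yP memP i by blast
        moreover have "\<not> a i \<bullet> y < b i" using nex i all by blast
        ultimately have ay: "a i \<bullet> y = b i" by simp
        show ?thesis using ag ay by (simp add: z_def inner_add_right inner_diff_right)
      qed
    qed
    have ginv: "(1 + e) *\<^sub>R g = z + e *\<^sub>R y"
      by (simp add: z_def algebra_simps)
    have "g \<in> open_segment z y"
      unfolding in_segment
    proof (intro conjI exI[of _ "e / (1 + e)"])
      show "z \<noteq> y"
      proof
        assume "z = y"
        then have "(1 + e) *\<^sub>R g = (1 + e) *\<^sub>R y" using ginv by (simp add: algebra_simps)
        then have "g = y" using e by simp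
        then show False using gG' yG by simp
      qed
      show "0 < e / (1 + e)" using e by simp
      show "e / (1 + e) < 1" using e by simp
      have "g = inverse (1 + e) *\<^sub>R ((1 + e) *\<^sub>R g)" using e by simp
      also have "\<dots> = inverse (1 + e) *\<^sub>R z + (inverse (1 + e) * e) *\<^sub>R y"
        unfolding ginv by (simp add: scaleR_add_right)
      finally have gg: "g = inverse (1 + e) *\<^sub>R z + (inverse (1 + e) * e) *\<^sub>R y" .
      have s1: "inverse (1 + e) = 1 - e / (1 + e)" using e by (simp add: field_simps)
      have s2: "inverse (1 + e) * e = e / (1 + e)" by (simp add: divide_inverse_commute)
      show "g = (1 - e / (1 + e)) *\<^sub>R z + (e / (1 + e)) *\<^sub>R y"
        using gg unfolding s2 unfolding s1 .
    qed
    then have "y \<in> G" using face_ofD[OF GP _ zP yP gG'] by blast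
    then show False using yG by simp
  qed
  then obtain i where i: "i < length R" "\<forall>z\<in>G. a i \<bullet> z = b i" "a i \<bullet> y < b i" by blast
  define H where "H = F \<inter> {x. a i \<bullet> x = b i}"
  have Fle: "\<forall>x\<in>F. a i \<bullet> x \<le> b i" using FP memP i(1) by blast
  have Hface: "H face_of F" unfolding H_def
    using face_of_Int_supporting_hyperplane_le[OF convF] Fle by blast
  have GH: "G \<subseteq> H" using i(2) GsubF H_def by blast
  have "y \<notin> H" using i(3) H_def by auto
  then have "H \<noteq> F" using yF by blast
  then have ltH: "aff_dim H < aff_dim F" using face_of_aff_dim_lt[OF convF Hface] by blast
  have "G = H"
  proof (rule ccontr)
    assume GH': "G \<noteq> H"
    have "G face_of H" using face_of_subset[OF GF(1) GH] face_of_imp_subset[OF Hface] by blast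
    then have "aff_dim G < aff_dim H"
      using face_of_aff_dim_lt[OF face_of_imp_convex[OF Hface]] GH' by blast
    then show False using ltH GF(3) by linarith
  qed
  then show ?thesis using i(1) H_def a_def b_def by auto
qed

lemma lambda_exists:
  fixes F :: "'a::euclidean_space set"
  assumes polyF: "polytope F" and Fle: "\<forall>x\<in>F. a \<bullet> x \<le> b" and x0: "x0 \<in> F" "a \<bullet> x0 = b"
    and maxG: "\<forall>z\<in>F. a \<bullet> z = b \<longrightarrow> c \<bullet> z \<le> c \<bullet> x0"
  shows "\<exists>l>0. \<forall>z\<in>F. c \<bullet> z + l * (a \<bullet> z) \<le> c \<bullet> x0 + l * (a \<bullet> x0)"
proof -
  define V where "V = vertices F"
  have finV: "finite V" using polytope_vertices(1)[OF polyF] V_def by simp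
  have VF: "V \<subseteq> F" unfolding V_def vertices_def using extreme_point_of_def by blast
  define W where "W = {w\<in>V. a \<bullet> w < b}"
  have finW: "finite W" using finV W_def by simp
  define l where "l = 1 + (\<Sum>w\<in>W. \<bar>c \<bullet> w - c \<bullet> x0\<bar> / (b - a \<bullet> w))"
  have sum0: "(\<Sum>w\<in>W. \<bar>c \<bullet> w - c \<bullet> x0\<bar> / (b - a \<bullet> w)) \<ge> 0"
    by (intro sum_nonneg) (auto simp: W_def)
  have lpos: "l > 0" using sum0 l_def by simp
  have vert: "\<forall>w\<in>V. (c + l *\<^sub>R a) \<bullet> w \<le> (c + l *\<^sub>R a) \<bullet> x0"
  proof
    fix w assume wV: "w \<in> V"
    show "(c + l *\<^sub>R a) \<bullet> w \<le> (c + l *\<^sub>R a) \<bullet> x0"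
    proof (cases "a \<bullet> w < b")
      case True
      then have wW: "w \<in> W" using wV W_def by simp
      have "\<bar>c \<bullet> w - c \<bullet> x0\<bar> / (b - a \<bullet> w) \<le> (\<Sum>w\<in>W. \<bar>c \<bullet> w - c \<bullet> x0\<bar> / (b - a \<bullet> w))"
        by (rule member_le_sum) (use wW finW W_def in auto)
      then have "\<bar>c \<bullet> w - c \<bullet> x0\<bar> / (b - a \<bullet> w) \<le> l" using l_def by simp
      then have "\<bar>c \<bullet> w - c \<bullet> x0\<bar> \<le> l * (b - a \<bullet> w)" using True by (simp add: pos_divide_le_eq)
      moreover have "c \<bullet> w - c \<bullet> x0 \<le> \<bar>c \<bullet> w - c \<bullet> x0\<bar>" by simp
      moreover have "l * (b - a \<bullet> w) = l * b - l * (a \<bullet> w)" by (simp add: right_diff_distrib)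
      ultimately show ?thesis using x0(2) by (simp add: inner_add_left)
    next
      case False
      then have "a \<bullet> w = b" using Fle wV VF by force
      then have "c \<bullet> w \<le> c \<bullet> x0" using maxG wV VF by blast
      then show ?thesis using \<open>a \<bullet> w = b\<close> x0(2) by (simp add: inner_add_left)
    qed
  qed
  have "\<forall>z\<in>F. (c + l *\<^sub>R a) \<bullet> z \<le> (c + l *\<^sub>R a) \<bullet> x0"
    using polytope_max_vertex[OF polyF] vert V_def by blast
  then show ?thesis using lpos by (intro exI[of _ l]) (simp add: inner_add_left)
qed

lemma frac_cross:
  fixes d1 d2 n1 n2 :: real
  shows "d1 > 0 \<Longrightarrow> d2 > 0 \<Longrightarrow> n1 / d1 \<le> n2 / d2 \<Longrightarrow> n1 * d2 \<le> n2 * d1"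
  by (simp add: field_simps)

lemma frac_cross2:
  fixes n d nn dd :: real
  shows "nn * d \<le> n * dd \<Longrightarrow> nn > 0 \<Longrightarrow> d \<le> dd / nn * n"
  by (simp add: field_simps)

lemma shadow:
  fixes F :: "'a::euclidean_space set"
  assumes polyF: "polytope F"
  shows "x \<in> vertices F \<Longrightarrow> l > 0 \<Longrightarrow> (\<forall>z\<in>F. c \<bullet> z + l * (a \<bullet> z) \<le> c \<bullet> x + l * (a \<bullet> x)) \<Longrightarrow>
    \<exists>p. p \<noteq> [] \<and> hd p = x \<and> set p \<subseteq> vertices F \<and>
      successively (\<lambda>u w. closed_segment u w edge_of F \<and> c \<bullet> u < c \<bullet> w) p \<and>
      (\<forall>z\<in>F. c \<bullet> z \<le> c \<bullet> last p) \<and>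
      length p \<le> card {t \<in> (\<lambda>z. a \<bullet> z) ` vertices F. t \<le> a \<bullet> x}"
proof (induction "card {w \<in> vertices F. c \<bullet> x < c \<bullet> w}" arbitrary: x l rule: less_induct)
  case less
  note xV = less.prems(1) and lpos = less.prems(2) and xmax = less.prems(3)
  define V where "V = vertices F"
  have finV: "finite V" using polytope_vertices(1)[OF polyF] V_def by simp
  have VF: "V \<subseteq> F" unfolding V_def vertices_def using extreme_point_of_def by blast
  have xF: "x \<in> F" using xV VF V_def by blast
  have xext: "x extreme_point_of F" using xV unfolding vertices_def by blast
  define Sx where "Sx = {t \<in> (\<lambda>z. a \<bullet> z) ` V. t \<le> a \<bullet> x}"
  have finSx: "finite Sx" using finV Sx_def by simp
  have axS: "a \<bullet> x \<in> Sx" using xV V_def Sx_def by simp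
  have "card Sx > 0" using finSx axS by (auto simp: card_gt_0_iff)
  then have cardpos: "1 \<le> card Sx" by simp
  have SxF: "Sx = {t \<in> (\<lambda>z. a \<bullet> z) ` vertices F. t \<le> a \<bullet> x}" by (simp add: Sx_def V_def)
  show ?case
  proof (cases "\<forall>z\<in>F. c \<bullet> z \<le> c \<bullet> x")
    case True
    then show ?thesis using xV cardpos SxF by (intro exI[of _ "[x]"]) simp
  next
    case False
    then obtain y where yF: "y \<in> F" and cy: "c \<bullet> y > c \<bullet> x" by (auto simp: not_le)
    obtain w0 where w0: "closed_segment x w0 edge_of F" "c \<bullet> w0 > c \<bullet> x"
      using loc[OF polyF xext yF cy] by blast
    define W where "W = {w \<in> V. closed_segment x w edge_of F \<and> c \<bullet> x < c \<bullet> w}"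
    have "closed_segment x w0 face_of F" using w0(1) edge_of_def by blast
    then have "w0 extreme_point_of F" using segment_face_of(2) by blast
    then have w0V: "w0 \<in> V" unfolding V_def vertices_def by blast
    have w0W: "w0 \<in> W" using w0 w0V W_def by simp
    have finW: "finite W" using finV W_def by simp
    have adec: "a \<bullet> w < a \<bullet> x" if "w \<in> W" for w
    proof -
      have "w \<in> F" using that W_def VF by blast
      then have "c \<bullet> w + l * (a \<bullet> w) \<le> c \<bullet> x + l * (a \<bullet> x)" using xmax by blast
      moreover have "c \<bullet> w > c \<bullet> x" using that W_def by simp
      ultimately have "l * (a \<bullet> w) < l * (a \<bullet> x)" by linarith
      then show ?thesis using lpos by simp
    qed
    define r where "r w = (a \<bullet> x - a \<bullet> w) / (c \<bullet> w - c \<bullet> x)" for w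
    have "Min (r ` W) \<in> r ` W" using finW w0W by (intro Min_in) auto
    then obtain ws where wsW: "ws \<in> W" and rws: "r ws = Min (r ` W)" by auto
    have rmin: "r ws \<le> r w" if "w \<in> W" for w using finW that rws by simp
    have D1: "c \<bullet> ws - c \<bullet> x > 0" using wsW W_def by simp
    have N1: "a \<bullet> x - a \<bullet> ws > 0" using adec[OF wsW] by simp
    define \<mu> where "\<mu> = (c \<bullet> ws - c \<bullet> x) / (a \<bullet> x - a \<bullet> ws)"
    have mupos: "\<mu> > 0" using D1 N1 by (simp add: \<mu>_def)
    have mul: "\<mu> \<le> l"
    proof -
      have "ws \<in> F" using wsW W_def VF by blast
      then have "c \<bullet> ws + l * (a \<bullet> ws) \<le> c \<bullet> x + l * (a \<bullet> x)" using xmax by blast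
      then have "c \<bullet> ws - c \<bullet> x \<le> l * (a \<bullet> x - a \<bullet> ws)" by (simp add: right_diff_distrib)
      then show ?thesis using N1 by (simp add: \<mu>_def pos_divide_le_eq)
    qed
    have eqmu: "\<mu> * (a \<bullet> x - a \<bullet> ws) = c \<bullet> ws - c \<bullet> x" using N1 by (simp add: \<mu>_def)
    have xm: "\<forall>z\<in>F. c \<bullet> z + \<mu> * (a \<bullet> z) \<le> c \<bullet> x + \<mu> * (a \<bullet> x)"
    proof (rule ccontr)
      assume "\<not> ?thesis"
      then obtain z where zF: "z \<in> F" and "c \<bullet> z + \<mu> * (a \<bullet> z) > c \<bullet> x + \<mu> * (a \<bullet> x)"
        by (auto simp: not_le)
      then have "(c + \<mu> *\<^sub>R a) \<bullet> z > (c + \<mu> *\<^sub>R a) \<bullet> x" by (simp add: inner_add_left)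
      then obtain w where w: "closed_segment x w edge_of F" "(c + \<mu> *\<^sub>R a) \<bullet> w > (c + \<mu> *\<^sub>R a) \<bullet> x"
        using loc[OF polyF xext zF] by blast
      have ineq: "c \<bullet> w + \<mu> * (a \<bullet> w) > c \<bullet> x + \<mu> * (a \<bullet> x)" using w(2) by (simp add: inner_add_left)
      have "closed_segment x w face_of F" using w(1) edge_of_def by blast
      then have "w extreme_point_of F" using segment_face_of(2) by blast
      then have wV: "w \<in> V" unfolding V_def vertices_def by blast
      have wF: "w \<in> F" using wV VF by blast
      show False
      proof (cases "c \<bullet> x < c \<bullet> w")
        case True
        then have wW: "w \<in> W" using wV w(1) W_def by simp
        have D2: "c \<bullet> w - c \<bullet> x > 0" using True by simp
        have "(a \<bullet> x - a \<bullet> ws) / (c \<bullet> ws - c \<bullet> x) \<le> (a \<bullet> x - a \<bullet> w) / (c \<bullet> w - c \<bullet> x)"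
          using rmin[OF wW] by (simp add: r_def)
        then have "(a \<bullet> x - a \<bullet> ws) * (c \<bullet> w - c \<bullet> x) \<le> (a \<bullet> x - a \<bullet> w) * (c \<bullet> ws - c \<bullet> x)"
          using frac_cross[OF D1 D2] by blast
        then have "c \<bullet> w - c \<bullet> x \<le> (c \<bullet> ws - c \<bullet> x) / (a \<bullet> x - a \<bullet> ws) * (a \<bullet> x - a \<bullet> w)"
          using N1 by (rule frac_cross2)
        then have "c \<bullet> w - c \<bullet> x \<le> \<mu> * (a \<bullet> x - a \<bullet> w)" by (simp only: \<mu>_def)
        then show False using ineq by (simp add: right_diff_distrib)
      next
        case False
        have wl: "c \<bullet> w + l * (a \<bullet> w) \<le> c \<bullet> x + l * (a \<bullet> x)" using xmax wF by blast
        show False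
        proof (cases "a \<bullet> w \<le> a \<bullet> x")
          case True
          then have "\<mu> * (a \<bullet> w) \<le> \<mu> * (a \<bullet> x)" using mupos by simp
          then show False using ineq False by linarith
        next
          case False
          then have "\<mu> * (a \<bullet> w - a \<bullet> x) \<le> l * (a \<bullet> w - a \<bullet> x)"
            using mul by (intro mult_right_mono) auto
          then show False using ineq wl by (simp add: right_diff_distrib)
        qed
      qed
    qed
    have wsmax: "\<forall>z\<in>F. c \<bullet> z + \<mu> * (a \<bullet> z) \<le> c \<bullet> ws + \<mu> * (a \<bullet> ws)"
    proof -
      have "c \<bullet> ws + \<mu> * (a \<bullet> ws) = c \<bullet> x + \<mu> * (a \<bullet> x)"
        using eqmu by (simp add: right_diff_distrib)
      then show ?thesis using xm by simp
    qed
    have wsV: "ws \<in> vertices F" using wsW W_def V_def by simp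
    have cws: "c \<bullet> x < c \<bullet> ws" using wsW W_def by simp
    have lt: "card {w \<in> vertices F. c \<bullet> ws < c \<bullet> w} < card {w \<in> vertices F. c \<bullet> x < c \<bullet> w}"
    proof (rule psubset_card_mono)
      show "finite {w \<in> vertices F. c \<bullet> x < c \<bullet> w}" using finV V_def by simp
      show "{w \<in> vertices F. c \<bullet> ws < c \<bullet> w} \<subset> {w \<in> vertices F. c \<bullet> x < c \<bullet> w}"
        using cws wsV by auto
    qed
    obtain p' where p': "p' \<noteq> []" "hd p' = ws" "set p' \<subseteq> vertices F"
      "successively (\<lambda>u w. closed_segment u w edge_of F \<and> c \<bullet> u < c \<bullet> w) p'"
      "\<forall>z\<in>F. c \<bullet> z \<le> c \<bullet> last p'"
      "length p' \<le> card {t \<in> (\<lambda>z. a \<bullet> z) ` vertices F. t \<le> a \<bullet> ws}"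
      using less.hyps[OF lt wsV mupos wsmax] by blast
    define Sws where "Sws = {t \<in> (\<lambda>z. a \<bullet> z) ` V. t \<le> a \<bullet> ws}"
    have "insert (a \<bullet> x) Sws \<subseteq> Sx" using N1 axS Sws_def Sx_def by auto
    moreover have "a \<bullet> x \<notin> Sws" using N1 Sws_def by auto
    moreover have "finite Sws" using finV Sws_def by simp
    ultimately have cardle: "Suc (card Sws) \<le> card Sx"
      using card_mono[OF finSx] by (metis card_insert_disjoint)
    have edge: "closed_segment x ws edge_of F" using wsW W_def by simp
    show ?thesis
    proof (intro exI[of _ "x # p'"] conjI)
      show "successively (\<lambda>u w. closed_segment u w edge_of F \<and> c \<bullet> u < c \<bullet> w) (x # p')"
        using p'(1,2,4) edge cws by (simp add: successively_Cons)
      show "set (x # p') \<subseteq> vertices F" using p'(3) xV by simp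
      show "\<forall>z\<in>F. c \<bullet> z \<le> c \<bullet> last (x # p')" using p'(1,5) by simp
      show "length (x # p') \<le> card {t \<in> (\<lambda>z. a \<bullet> z) ` vertices F. t \<le> a \<bullet> x}"
        using p'(6) cardle Sws_def Sx_def V_def by simp
    qed simp_all
  qed
qed

lemma edge_face_lift:
  assumes "G face_of F" "E edge_of G"
  shows "E edge_of F"
  using assms unfolding edge_of_def using face_of_trans by blast

lemma main_induct:
  fixes P :: "'a::euclidean_space set"
  assumes PR: "P = ineq_set R" and polyP: "polytope P"
    and lev: "\<forall>i<length R. card ((\<lambda>v. fst (R!i) \<bullet> v) ` vertices P) \<le> m + 1"
  shows "F face_of P \<Longrightarrow> aff_dim F = int k \<Longrightarrow> v \<in> vertices F \<Longrightarrow>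
    \<exists>p. p \<noteq> [] \<and> hd p = v \<and> set p \<subseteq> vertices F \<and>
      successively (\<lambda>u w. closed_segment u w edge_of F \<and> c \<bullet> u < c \<bullet> w) p \<and>
      (\<forall>z\<in>F. c \<bullet> z \<le> c \<bullet> last p) \<and> length p \<le> Suc (if k = 0 then 0 else (k - 1) * m + 1)"
proof (induction k arbitrary: F v rule: less_induct)
  case (less k)
  note Fface = less.prems(1) and dimF = less.prems(2) and vV = less.prems(3)
  have polyF: "polytope F" using face_of_polytope_polytope polyP Fface by blast
  have convF: "convex F" using polyF polytope_imp_convex by blast
  have vext: "v extreme_point_of F" using vV unfolding vertices_def by blast
  have vF: "v \<in> F" using vext extreme_point_of_def by blast
  consider "k = 0" | "k = 1" | "k \<ge> 2" by linarith
  then show ?case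
  proof cases
    case 1
    then obtain a0 where "F = {a0}" using dimF aff_dim_eq_0 by auto
    then have "F = {v}" using vF by simp
    then show ?thesis using vV by (intro exI[of _ "[v]"]) simp
  next
    case 2
    show ?thesis
    proof (cases "\<forall>z\<in>F. c \<bullet> z \<le> c \<bullet> v")
      case True then show ?thesis using vV by (intro exI[of _ "[v]"]) simp
    next
      case False
      then obtain y where yF: "y \<in> F" and cy: "c \<bullet> y > c \<bullet> v" by (auto simp: not_le)
      obtain w where w: "closed_segment v w edge_of F" "c \<bullet> w > c \<bullet> v"
        using loc[OF polyF vext yF cy] by blast
      have wface: "closed_segment v w face_of F" using w(1) edge_of_def by blast
      have wext: "w extreme_point_of F" using segment_face_of(2)[OF wface] .
      have d1: "aff_dim (closed_segment v w) = 1" using w(1) edge_of_def by blast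
      have segF: "closed_segment v w = F"
      proof (rule ccontr)
        assume "closed_segment v w \<noteq> F"
        then have "aff_dim (closed_segment v w) < aff_dim F"
          using face_of_aff_dim_lt[OF convF wface] by blast
        then show False using d1 dimF 2 by simp
      qed
      have wmax: "\<forall>z\<in>F. c \<bullet> z \<le> c \<bullet> w"
      proof
        fix z assume "z \<in> F"
        then have "z \<in> closed_segment v w" using segF by simp
        then show "c \<bullet> z \<le> c \<bullet> w" using seg_le w(2) by (metis less_imp_le)
      qed
      have wV: "w \<in> vertices F" using wext unfolding vertices_def by blast
      show ?thesis
        using vV wV w 2 wmax by (intro exI[of _ "[v, w]"]) simp
    qed
  next
    case 3
    define j where "j = k - 2"
    have kj: "k = j + 2" using 3 j_def by simp
    have polyhF: "polyhedron F" using polyF polytope_imp_polyhedron by blast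
    have vface: "{v} face_of F" using vext face_of_singleton by blast
    have vneF: "{v} \<noteq> F"
    proof
      assume "{v} = F"
      then have "aff_dim F = 0" by auto
      then show False using dimF 3 by simp
    qed
    obtain G where G: "G facet_of F" "{v} \<subseteq> G"
      using face_of_polyhedron_subset_facet[OF polyhF vface _ vneF] by blast
    have GF: "G face_of F" using G(1) facet_of_imp_face_of by blast
    have GP: "G face_of P" using face_of_trans GF Fface by blast
    have "aff_dim G = aff_dim F - 1" using G(1) facet_of_def by blast
    then have dimG: "aff_dim G = int (k - 1)" using dimF 3 by (simp add: of_nat_diff)
    have vG: "v \<in> vertices G" using vertices_sub[OF vV] G(2) facet_of_imp_subset[OF G(1)] by blast
    have km: "k - 1 < k" using 3 by simp
    obtain p1 where p1: "p1 \<noteq> []" "hd p1 = v" "set p1 \<subseteq> vertices G"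
      "successively (\<lambda>u w. closed_segment u w edge_of G \<and> c \<bullet> u < c \<bullet> w) p1"
      "\<forall>z\<in>G. c \<bullet> z \<le> c \<bullet> last p1"
      "length p1 \<le> Suc (if k - 1 = 0 then 0 else (k - 1 - 1) * m + 1)"
      using less.IH[OF km GP dimG vG] by blast
    define x0 where "x0 = last p1"
    have x0G: "x0 \<in> vertices G" using p1(1,3) x0_def last_in_set by blast
    have x0G': "x0 \<in> G" using x0G unfolding vertices_def extreme_point_of_def by blast
    obtain i where i: "i < length R" "G = F \<inter> {x. fst (R!i) \<bullet> x = snd (R!i)}"
      using rows[OF PR Fface G(1)] by blast
    define a where "a = fst (R!i)"
    define b where "b = snd (R!i)"
    have FP: "F \<subseteq> P" using Fface face_of_imp_subset by blast
    have Fle: "\<forall>x\<in>F. a \<bullet> x \<le> b"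
      using FP PR i(1) by (auto simp: ineq_set_def a_def b_def)
    have ax0: "a \<bullet> x0 = b" using x0G' i(2) a_def b_def by auto
    have x0F: "x0 \<in> F" using x0G' i(2) by auto
    have maxG: "\<forall>z\<in>F. a \<bullet> z = b \<longrightarrow> c \<bullet> z \<le> c \<bullet> x0"
      using p1(5) i(2) x0_def a_def b_def by auto
    obtain l where l: "l > 0" "\<forall>z\<in>F. c \<bullet> z + l * (a \<bullet> z) \<le> c \<bullet> x0 + l * (a \<bullet> x0)"
      using lambda_exists[OF polyF Fle x0F ax0 maxG] by blast
    have x0V: "x0 \<in> vertices F" using vertices_face[OF GF x0G] .
    obtain p2 where p2: "p2 \<noteq> []" "hd p2 = x0" "set p2 \<subseteq> vertices F"
      "successively (\<lambda>u w. closed_segment u w edge_of F \<and> c \<bullet> u < c \<bullet> w) p2"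
      "\<forall>z\<in>F. c \<bullet> z \<le> c \<bullet> last p2"
      "length p2 \<le> card {t \<in> (\<lambda>z. a \<bullet> z) ` vertices F. t \<le> a \<bullet> x0}"
      using shadow[OF polyF x0V l(1) l(2)] by blast
    have finVP: "finite (vertices P)" using polytope_vertices(1)[OF polyP] .
    have VFP: "vertices F \<subseteq> vertices P" using vertices_face[OF Fface] by blast
    have "card {t \<in> (\<lambda>z. a \<bullet> z) ` vertices F. t \<le> a \<bullet> x0} \<le> card ((\<lambda>z. a \<bullet> z) ` vertices P)"
      by (rule card_mono) (use finVP VFP in auto)
    also have "\<dots> \<le> m + 1" using lev i(1) unfolding a_def by simp
    finally have len2: "length p2 \<le> m + 1" using p2(6) by linarith
    define p where "p = p1 @ tl p2"
    have p2eq: "p2 = x0 # tl p2" using p2(1,2) by (cases p2) auto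
    have succ2: "successively (\<lambda>u w. closed_segment u w edge_of F \<and> c \<bullet> u < c \<bullet> w) (x0 # tl p2)"
      using p2(4) p2eq by simp
    have succ1: "successively (\<lambda>u w. closed_segment u w edge_of F \<and> c \<bullet> u < c \<bullet> w) p1"
      using p1(4) by (rule successively_mono) (use edge_face_lift[OF GF] in blast)
    have lastp: "last p = last p2"
    proof (cases "tl p2 = []")
      case True
      then have "p2 = [x0]" using p2eq by simp
      then show ?thesis using True p_def x0_def by simp
    next
      case False
      then show ?thesis using p_def p2eq by (metis last_ConsR last_appendR)
    qed
    have VGF: "vertices G \<subseteq> vertices F" using vertices_face[OF GF] by blast
    show ?thesis
    proof (intro exI[of _ p] conjI)
      show "p \<noteq> []" using p1(1) p_def by simp
      show "hd p = v" using p1(1,2) p_def by simp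
      show "set p \<subseteq> vertices F"
      proof -
        have "set (tl p2) \<subseteq> set p2" using p2eq by (metis set_subset_Cons)
        then show ?thesis using p1(3) p2(3) VGF p_def by auto
      qed
      show "successively (\<lambda>u w. closed_segment u w edge_of F \<and> c \<bullet> u < c \<bullet> w) p"
        unfolding p_def successively_append_iff
        using succ1 succ2 x0_def by (auto simp: successively_Cons)
      show "\<forall>z\<in>F. c \<bullet> z \<le> c \<bullet> last p" using lastp p2(5) by simp
      have "length p = length p1 + (length p2 - 1)" using p_def by simp
      also have "\<dots> \<le> Suc (j * m + 1) + m" using p1(6) len2 kj by simp
      also have "\<dots> = Suc ((k - 1) * m + 1)" using kj by simp
      finally show "length p \<le> Suc (if k = 0 then 0 else (k - 1) * m + 1)" using 3 by simp
    qed
  qed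
qed

theorem mainTheorem3:
  fixes P :: "'a::euclidean_space set" and d m :: nat
  assumes "polytope P"
    and "aff_dim P = int d"
    and "d \<ge> 1"
    and "level_polytope (m + 1) P"
  shows "monotone_diameter P \<le> enat ((d - 1) * m + 1)"
proof -
  obtain R where PR: "P = ineq_set R"
    and lev: "\<forall>i<length R. card ((\<lambda>v. fst (R!i) \<bullet> v) ` vertices P) \<le> m + 1"
    using assms(4) unfolding level_polytope_def by blast
  have PP: "P face_of P" using face_of_refl polytope_imp_convex assms(1) by blast
  have key: "shortest_monotone_length P c v \<le> enat ((d - 1) * m + 1)" if vV: "v \<in> vertices P" for c v
  proof -
    obtain p where p: "p \<noteq> []" "hd p = v" "set p \<subseteq> vertices P"
      "successively (\<lambda>u w. closed_segment u w edge_of P \<and> c \<bullet> u < c \<bullet> w) p"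
      "\<forall>z\<in>P. c \<bullet> z \<le> c \<bullet> last p"
      "length p \<le> Suc (if d = 0 then 0 else (d - 1) * m + 1)"
      using main_induct[OF PR assms(1) lev PP assms(2) vV, of c] by blast
    have mp: "monotone_path P c p"
      unfolding monotone_path_def using p(1,3) succ_nth[OF p(4)] by blast
    have VP: "vertices P \<subseteq> P" unfolding vertices_def extreme_point_of_def by blast
    have "\<forall>u\<in>vertices P. c \<bullet> u \<le> c \<bullet> last p" using p(5) VP by blast
    then have mem: "p \<in> {p. monotone_path P c p \<and> hd p = v \<and> (\<forall>u\<in>vertices P. c \<bullet> u \<le> c \<bullet> last p)}"
      using mp p(2) by blast
    have "length p - 1 \<le> (d - 1) * m + 1" using p(6) assms(3) by simp
    then show ?thesis unfolding shortest_monotone_length_def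
      by (intro INF_lower2[OF mem]) simp
  qed
  show ?thesis unfolding monotone_diameter_def
    by (intro SUP_least key)
qed

end
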